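(* Let $H$ be a countably infinite group. Then the set $D(H)=D_L(H)\cap D_R(H)$ is non-empty and $H$-bi-invariant.
   Context: $2^H$ denotes the set of all subsets of $H$ with the product topology (pointwise convergence of characteristic functions). $H$ acts on $2^H$ by left multiplication $S\mapsto hS$ (the left action) and by right multiplication $S\mapsto Sh$ (the right action). $D_L(H)$ (resp. $D_R(H)$) is the set of $S\subseteq H$ whose orbit under the left (resp. right) action, $\{hS:h\in H\}$ (resp. $\{Sh:h\in H\}$), is dense in $2^H$. A subset of $2^H$ is $H$-bi-invariant if it is invariant under both the left and the right action. *)

theory Defs
  imports "HOL-Analysis.Analysis"
begin

text \<open>The space 2^H: subsets of H identified with their characteristic functions
  H \<Rightarrow> bool, carrying the product of discrete topologies on bool
  (topology of pointwise convergence).\<close>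
definition cantor_top :: "('a \<Rightarrow> bool) topology" where
  "cantor_top = product_topology (\<lambda>_. discrete_topology (UNIV :: bool set)) UNIV"

text \<open>Left and right translates of a subset (group written additively, not
  necessarily commutative: class group_add).\<close>
definition ltrans :: "'a::group_add \<Rightarrow> 'a set \<Rightarrow> 'a set" where
  "ltrans h S = (\<lambda>s. h + s) ` S"

definition rtrans :: "'a set \<Rightarrow> 'a::group_add \<Rightarrow> 'a set" where
  "rtrans S h = (\<lambda>s. s + h) ` S"

definition D_L :: "'a::group_add set set" where
  "D_L = {S. cantor_top closure_of ((\<lambda>h. (\<lambda>x. x \<in> ltrans h S)) ` UNIV) = topspace cantor_top}"

definition D_R :: "'a::group_add set set" where
  "D_R = {S. cantor_top closure_of ((\<lambda>h. (\<lambda>x. x \<in> rtrans S h)) ` UNIV) = topspace cantor_top}"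

definition bi_invariant :: "'a::group_add set set \<Rightarrow> bool" where
  "bi_invariant \<A> \<longleftrightarrow> (\<forall>S\<in>\<A>. \<forall>h. ltrans h S \<in> \<A> \<and> rtrans S h \<in> \<A>)"

end

theory Submission imports Defs begin
lemma topspace_cantor[simp]: "topspace cantor_top = UNIV"
  by (auto simp: cantor_top_def)
lemma t1: "f \<in> Pi\<^sub>E UNIV (\<lambda>i. if i \<in> F then {f i} else (UNIV::bool set))" by auto
lemma t2: "y \<in> Pi\<^sub>E UNIV (\<lambda>i. if i \<in> F then {f i} else (UNIV::bool set)) \<Longrightarrow> \<forall>i\<in>F. y i = f i"
  by (simp add: PiE_iff) (metis singletonD)
lemma t0: "finite (F::'a set) \<Longrightarrow> openin cantor_top (Pi\<^sub>E UNIV (\<lambda>i. if i \<in> F then {f i} else (UNIV::bool set)))"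
      unfolding cantor_top_def
      apply (rule product_topology_basis)
      apply simp
      apply (erule finite_subset[rotated]) apply auto done
lemma t4: assumes "cantor_top closure_of X = topspace cantor_top" "finite F"
  shows "\<exists>y\<in>X. \<forall>i\<in>F. y i = f i"
proof -
  have "f \<in> cantor_top closure_of X" using assms by simp
  then obtain y where "y \<in> X" "y \<in> Pi\<^sub>E UNIV (\<lambda>i. if i \<in> F then {f i} else (UNIV::bool set))"
    using t0[OF assms(2), of f] t1[of f F] unfolding in_closure_of by blast
  then show ?thesis using t2[of y F f] by blast
qed

lemma mem_ltrans: "x \<in> ltrans h S \<longleftrightarrow> -h + x \<in> S"
proof
  assume "x \<in> ltrans h S" then obtain s where "s \<in> S" "x = h + s" by (auto simp: ltrans_def)
  then show "-h + x \<in> S" by (simp add: minus_add_cancel)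
next
  assume "-h + x \<in> S" then have "h + (-h + x) \<in> ltrans h S" unfolding ltrans_def by blast
  then show "x \<in> ltrans h S" by (simp add: add_minus_cancel)
qed

lemma mem_rtrans: "x \<in> rtrans S h \<longleftrightarrow> x + -h \<in> S"
proof
  assume "x \<in> rtrans S h" then obtain s where "s \<in> S" "x = s + h" by (auto simp: rtrans_def)
  then show "x + -h \<in> S" by (simp add: add.assoc)
next
  assume "x + -h \<in> S" then have "(x + -h) + h \<in> rtrans S h" unfolding rtrans_def by blast
  then show "x \<in> rtrans S h" by (simp add: add.assoc)
qed

definition LP :: "'a::group_add set \<Rightarrow> bool" where
  "LP S \<longleftrightarrow> (\<forall>f F. finite F \<longrightarrow> (\<exists>h. \<forall>i\<in>F. (-h + i \<in> S) = f i))"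
definition RP :: "'a::group_add set \<Rightarrow> bool" where
  "RP S \<longleftrightarrow> (\<forall>f F. finite F \<longrightarrow> (\<exists>h. \<forall>i\<in>F. (i + -h \<in> S) = f i))"

lemma LP_l: assumes "LP S" shows "LP (ltrans k S)"
  unfolding LP_def
proof (intro allI impI)
  fix f and F :: "'a set" assume "finite F"
  then obtain h where h: "\<forall>i\<in>F. (-h + i \<in> S) = f i" using assms[unfolded LP_def, rule_format, of F f] by blast
  have e: "-k + (-(h + -k) + i) = -h + i" for i by (simp add: minus_add add.assoc del: add_uminus_conv_diff)
  show "\<exists>h. \<forall>i\<in>F. (-h + i \<in> ltrans k S) = f i"
    by (rule exI[of _ "h + -k"]) (simp add: mem_ltrans e h del: add_uminus_conv_diff)
qed

lemma LP_r: assumes "LP S" shows "LP (rtrans S k)"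
  unfolding LP_def
proof (intro allI impI)
  fix f and F :: "'a set" assume "finite F"
  then obtain h where h: "\<forall>j\<in>(\<lambda>i. i + -k) ` F. (-h + j \<in> S) = f (j + k)"
    using assms[unfolded LP_def, rule_format, of "(\<lambda>i. i + -k) ` F" "\<lambda>j. f (j + k)"] \<open>finite F\<close> by blast
  show "\<exists>h. \<forall>i\<in>F. (-h + i \<in> rtrans S k) = f i"
  proof (rule exI[of _ h], intro ballI)
    fix i assume "i \<in> F"
    then have "(-h + (i + -k) \<in> S) = f (i + -k + k)" using h \<open>i \<in> F\<close> by blast
    then show "(-h + i \<in> rtrans S k) = f i" by (simp add: mem_rtrans add.assoc del: add_uminus_conv_diff)
  qed
qed

lemma RP_l: assumes "RP S" shows "RP (ltrans k S)"
  unfolding RP_def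
proof (intro allI impI)
  fix f and F :: "'a set" assume "finite F"
  then obtain h where h: "\<forall>j\<in>(\<lambda>i. -k + i) ` F. (j + -h \<in> S) = f (k + j)"
    using assms[unfolded RP_def, rule_format, of "(\<lambda>i. -k + i) ` F" "\<lambda>j. f (k + j)"] \<open>finite F\<close> by blast
  show "\<exists>h. \<forall>i\<in>F. (i + -h \<in> ltrans k S) = f i"
  proof (rule exI[of _ h], intro ballI)
    fix i assume "i \<in> F"
    then have "(-k + i + -h \<in> S) = f (k + (-k + i))" using h \<open>i \<in> F\<close> by blast
    then show "(i + -h \<in> ltrans k S) = f i" by (simp add: mem_ltrans add.assoc del: add_uminus_conv_diff)
  qed
qed

lemma RP_r: assumes "RP S" shows "RP (rtrans S k)"
  unfolding RP_def
proof (intro allI impI)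
  fix f and F :: "'a set" assume "finite F"
  then obtain h where h: "\<forall>i\<in>F. (i + -h \<in> S) = f i" using assms[unfolded RP_def, rule_format, of F f] by blast
  have e: "(i + -(-k + h)) + -k = i + -h" for i by (simp add: minus_add add.assoc del: add_uminus_conv_diff)
  show "\<exists>h. \<forall>i\<in>F. (i + -h \<in> rtrans S k) = f i"
    by (rule exI[of _ "-k + h"]) (simp add: mem_rtrans e h del: add_uminus_conv_diff)
qed


lemma t5: assumes d: "\<And>f F. finite F \<Longrightarrow> \<exists>y\<in>X. \<forall>i\<in>F. y i = f i"
  shows "cantor_top closure_of X = topspace cantor_top"
proof (rule antisym)
  show "cantor_top closure_of X \<subseteq> topspace cantor_top" by (rule closure_of_subset_topspace)
  show "topspace cantor_top \<subseteq> cantor_top closure_of X"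
  proof
    fix x :: "'a \<Rightarrow> bool" assume "x \<in> topspace cantor_top"
    show "x \<in> cantor_top closure_of X" unfolding in_closure_of
    proof (intro conjI allI impI)
      show "x \<in> topspace cantor_top" by simp
      fix T assume T: "x \<in> T \<and> openin cantor_top T"
      have "\<exists>U. finite {i \<in> UNIV. U i \<noteq> topspace (discrete_topology (UNIV::bool set))} \<and>
               (\<forall>i \<in> UNIV. openin (discrete_topology UNIV) (U i)) \<and> x \<in> Pi\<^sub>E UNIV U \<and> Pi\<^sub>E UNIV U \<subseteq> T"
        using T unfolding cantor_top_def openin_product_topology_alt by blast
      then obtain U where U: "finite {i. U i \<noteq> (UNIV::bool set)}" "x \<in> Pi\<^sub>E UNIV U" "Pi\<^sub>E UNIV U \<subseteq> T"
        by auto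
      obtain y where y: "y \<in> X" "\<forall>i\<in>{i. U i \<noteq> UNIV}. y i = x i"
        using d[OF U(1), of x] by blast
      have "y i \<in> U i" for i
      proof (cases "U i = UNIV")
        case False then show ?thesis using y(2) U(2) by (auto simp: PiE_iff)
      qed simp
      then have "y \<in> Pi\<^sub>E UNIV U" by auto
      then show "\<exists>y. y \<in> X \<and> y \<in> T" using y(1) U(3) by blast
    qed
  qed
qed

lemma DL_iff: "S \<in> D_L \<longleftrightarrow> LP S"
proof
  assume "S \<in> D_L"
  then have c: "cantor_top closure_of range (\<lambda>h x. x \<in> ltrans h S) = topspace cantor_top"
    unfolding D_L_def mem_Collect_eq .
  show "LP S" unfolding LP_def
  proof (intro allI impI)
    fix f and F :: "'a set" assume "finite F"
    from t4[OF c this, of f] obtain h where "\<forall>i\<in>F. (i \<in> ltrans h S) = f i" by blast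
    then show "\<exists>h. \<forall>i\<in>F. (-h + i \<in> S) = f i" by (intro exI[of _ h]) (simp add: mem_ltrans)
  qed
next
  assume L: "LP S"
  have "cantor_top closure_of range (\<lambda>h x. x \<in> ltrans h S) = topspace cantor_top"
  proof (rule t5)
    fix f and F :: "'a set" assume "finite F"
    then obtain h where "\<forall>i\<in>F. (-h + i \<in> S) = f i" using L[unfolded LP_def, rule_format, of F f] by blast
    then have "\<forall>i\<in>F. (\<lambda>x. x \<in> ltrans h S) i = f i" by (simp add: mem_ltrans)
    then show "\<exists>y\<in>range (\<lambda>h x. x \<in> ltrans h S). \<forall>i\<in>F. y i = f i" by (rule bexI[where P="\<lambda>y. \<forall>i\<in>F. y i = f i" and x="\<lambda>x. x \<in> ltrans h S", OF _ rangeI[of "\<lambda>h x. x \<in> ltrans h S" h]])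
  qed
  then show "S \<in> D_L" unfolding D_L_def mem_Collect_eq .
qed

lemma DR_iff: "S \<in> D_R \<longleftrightarrow> RP S"
proof
  assume "S \<in> D_R"
  then have c: "cantor_top closure_of range (\<lambda>h x. x \<in> rtrans S h) = topspace cantor_top"
    unfolding D_R_def mem_Collect_eq .
  show "RP S" unfolding RP_def
  proof (intro allI impI)
    fix f and F :: "'a set" assume "finite F"
    from t4[OF c this, of f] obtain h where "\<forall>i\<in>F. (i \<in> rtrans S h) = f i" by blast
    then show "\<exists>h. \<forall>i\<in>F. (i + -h \<in> S) = f i" by (intro exI[of _ h]) (simp add: mem_rtrans del: add_uminus_conv_diff)
  qed
next
  assume L: "RP S"
  have "cantor_top closure_of range (\<lambda>h x. x \<in> rtrans S h) = topspace cantor_top"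
  proof (rule t5)
    fix f and F :: "'a set" assume "finite F"
    then obtain h where "\<forall>i\<in>F. (i + -h \<in> S) = f i" using L[unfolded RP_def, rule_format, of F f] by blast
    then have "\<forall>i\<in>F. (\<lambda>x. x \<in> rtrans S h) i = f i" by (simp add: mem_rtrans del: add_uminus_conv_diff)
    then show "\<exists>y\<in>range (\<lambda>h x. x \<in> rtrans S h). \<forall>i\<in>F. y i = f i" by (rule bexI[where P="\<lambda>y. \<forall>i\<in>F. y i = f i" and x="\<lambda>x. x \<in> rtrans S h", OF _ rangeI[of "\<lambda>h x. x \<in> rtrans S h" h]])
  qed
  then show "S \<in> D_R" unfolding D_R_def mem_Collect_eq .
qed

definition phi :: "bool \<Rightarrow> 'a::group_add \<Rightarrow> 'a \<Rightarrow> 'a" where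
  "phi b g c = (if b then -g + c else c + -g)"

lemma phi_inj: "phi b g x = phi b g y \<Longrightarrow> x = y"
  unfolding phi_def by (cases b) (simp_all only: if_True if_False add_left_cancel add_right_cancel)

lemma phi_solve: "phi b g c = u \<Longrightarrow> g = (if b then c + -u else -u + c)"
proof (cases b)
  case True
  assume "phi b g c = u"
  then have "-g + c = u" using True by (simp add: phi_def)
  then have "c = g + u" by (metis add_minus_cancel)
  then show ?thesis using True by (simp add: add.assoc)
next
  case False
  assume "phi b g c = u"
  then have "c + -g = u" using False by (simp add: phi_def)
  then have "c = u + g" by (metis diff_add_cancel diff_conv_add_uminus)
  then show ?thesis using False by (simp add: add.assoc[symmetric])
qed

lemma exists_g:
  assumes "infinite (UNIV::'a::group_add set)" "finite C" "finite U"
  shows "\<exists>g::'a. phi b g ` C \<inter> U = {}"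
proof -
  let ?B = "(\<lambda>(c,u). if b then c + -u else -u + c) ` (C \<times> U)"
  have "finite ?B" using assms by simp
  then obtain g where g: "g \<notin> ?B" using ex_new_if_finite[OF assms(1)] by blast
  have "phi b g ` C \<inter> U = {}"
  proof (rule ccontr)
    assume "phi b g ` C \<inter> U \<noteq> {}"
    then obtain c where c: "c \<in> C" "phi b g c \<in> U" by blast
    then have "g \<in> ?B" using phi_solve[of b g c "phi b g c"] by force
    then show False using g by blast
  qed
  then show ?thesis by blast
qed

definition gch :: "bool \<Rightarrow> 'a::group_add set \<Rightarrow> 'a set \<Rightarrow> 'a" where
  "gch b C U = (SOME g. phi b g ` C \<inter> U = {})"

primrec used :: "(nat \<Rightarrow> 'a::group_add set) \<Rightarrow> (nat \<Rightarrow> bool) \<Rightarrow> nat \<Rightarrow> 'a set" where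
  "used Fs bs 0 = {}"
| "used Fs bs (Suc n) = used Fs bs n \<union> phi (bs n) (gch (bs n) (Fs n) (used Fs bs n)) ` Fs n"

definition GG :: "(nat \<Rightarrow> 'a::group_add set) \<Rightarrow> (nat \<Rightarrow> bool) \<Rightarrow> nat \<Rightarrow> 'a" where
  "GG Fs bs n = gch (bs n) (Fs n) (used Fs bs n)"

lemma used_finite: "(\<And>n. finite (Fs n)) \<Longrightarrow> finite (used Fs bs n)"
  by (induction n) auto

lemma piece_disj:
  assumes "infinite (UNIV::'a::group_add set)" "\<And>n. finite (Fs n)"
  shows "phi (bs n) (GG Fs bs n) ` Fs n \<inter> used Fs bs n = ({}::'a set)"
  unfolding GG_def gch_def
  by (rule someI_ex[OF exists_g[OF assms(1) assms(2) used_finite[OF assms(2)]]])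

lemma piece_sub: "m < n \<Longrightarrow> phi (bs m) (GG Fs bs m) ` Fs m \<subseteq> used Fs bs n"
proof (induction n)
  case 0 then show ?case by simp
next
  case (Suc n)
  show ?case
  proof (cases "m = n")
    case True
    show ?thesis unfolding GG_def True used.simps by (rule Un_upper2)
  next
    case False
    then have "m < n" using Suc.prems by simp
    show ?thesis unfolding used.simps by (rule le_supI1[OF Suc.IH[OF \<open>m < n\<close>]])
  qed
qed

lemma disj_aux: "A \<subseteq> U \<Longrightarrow> B \<inter> U = {} \<Longrightarrow> A \<inter> B = {}" by blast
lemma disj_aux2: "A \<subseteq> U \<Longrightarrow> B \<inter> U = {} \<Longrightarrow> B \<inter> A = {}" by blast
lemma disj_aux3: "x \<in> A \<Longrightarrow> x \<in> B \<Longrightarrow> A \<inter> B = {} \<Longrightarrow> False" by blast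

lemma pieces_disj:
  assumes "infinite (UNIV::'a::group_add set)" "\<And>n. finite (Fs n)" "m \<noteq> n"
  shows "phi (bs m) (GG Fs bs m) ` Fs m \<inter> phi (bs n) (GG Fs bs n) ` Fs n = ({}::'a set)"
proof (cases "m < n")
  case True
  show ?thesis by (rule disj_aux[OF piece_sub[OF True, of bs Fs] piece_disj[OF assms(1,2), of bs n]])
next
  case False
  have nm: "n < m" using assms(3) False by simp
  show ?thesis by (rule disj_aux2[OF piece_sub[OF nm, of bs Fs] piece_disj[OF assms(1,2), of bs m]])
qed

lemma key:
  assumes "infinite (UNIV::'a::group_add set)" "\<And>n. finite (Fs n)" "\<And>n. Ps n \<subseteq> Fs n"
    and "x \<in> Fs n"
  shows "(phi (bs n) (GG Fs bs n) x \<in> (\<Union>m. phi (bs m) (GG Fs bs m) ` Ps m)) \<longleftrightarrow> x \<in> (Ps n :: 'a set)"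
proof
  assume "x \<in> Ps n" then show "phi (bs n) (GG Fs bs n) x \<in> (\<Union>m. phi (bs m) (GG Fs bs m) ` Ps m)" by blast
next
  assume "phi (bs n) (GG Fs bs n) x \<in> (\<Union>m. phi (bs m) (GG Fs bs m) ` Ps m)"
  then obtain m y where my: "y \<in> Ps m" "phi (bs n) (GG Fs bs n) x = phi (bs m) (GG Fs bs m) y" by blast
  have "m = n"
  proof (rule ccontr)
    assume "m \<noteq> n"
    have "phi (bs n) (GG Fs bs n) x \<in> phi (bs m) (GG Fs bs m) ` Fs m" using my assms(3) by auto
    moreover have "phi (bs n) (GG Fs bs n) x \<in> phi (bs n) (GG Fs bs n) ` Fs n" using assms(4) by blast
    ultimately show False by (rule disj_aux3[OF _ _ pieces_disj[OF assms(1,2) \<open>m \<noteq> n\<close>, of bs]])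
  qed
  then have "x = y" using my(2) phi_inj by metis
  then show "x \<in> Ps n" using my(1) \<open>m = n\<close> by simp
qed


lemma exists_LR:
  assumes cnt: "countable (UNIV :: 'a::group_add set)" and inf: "infinite (UNIV :: 'a set)"
  shows "\<exists>S::'a set. LP S \<and> RP S"
proof -
  define C where "C = {A::'a set. finite A \<and> A \<subseteq> UNIV}"
  define Pats where "Pats = {(F,P). finite F \<and> P \<subseteq> (F::'a set)} \<times> (UNIV::bool set)"
  have cC: "countable C" unfolding C_def by (rule countable_Collect_finite_subset[OF cnt])
  have sub: "Pats \<subseteq> (C \<times> C) \<times> (UNIV::bool set)"
    unfolding Pats_def C_def by (auto intro: finite_subset)
  have "countable ((C \<times> C) \<times> (UNIV::bool set))" using cC by simp
  then have cP: "countable Pats" by (rule countable_subset[OF sub])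
  have neP: "Pats \<noteq> {}" unfolding Pats_def by auto
  define e where "e = from_nat_into Pats"
  have eP: "e n \<in> Pats" for n unfolding e_def by (rule from_nat_into[OF neP])
  have rng: "range e = Pats" unfolding e_def by (rule range_from_nat_into[OF neP cP])
  define Fs where "Fs n = fst (fst (e n))" for n
  define Ps where "Ps n = snd (fst (e n))" for n
  define bs where "bs n = snd (e n)" for n
  have fin: "finite (Fs n)" for n using eP[of n] unfolding Pats_def Fs_def by auto
  have PF: "Ps n \<subseteq> Fs n" for n using eP[of n] unfolding Pats_def Fs_def Ps_def by auto
  define S where "S = (\<Union>m. phi (bs m) (GG Fs bs m) ` Ps m)"
  have find: "\<exists>n. Fs n = F \<and> Ps n = {i\<in>F. f i} \<and> bs n = b" if "finite F" for F :: "'a set" and f b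
  proof -
    have "((F, {i\<in>F. f i}), b) \<in> range e" unfolding rng Pats_def using that by auto
    then obtain n where "e n = ((F, {i\<in>F. f i}), b)" by (metis imageE)
    then show ?thesis unfolding Fs_def Ps_def bs_def by (intro exI[of _ n]) simp
  qed
  have k: "(phi (bs n) (GG Fs bs n) x \<in> S) \<longleftrightarrow> x \<in> Ps n" if "x \<in> Fs n" for x n
    unfolding S_def by (rule key[of Fs Ps x n bs, OF inf fin PF that])
  have "LP S" unfolding LP_def
  proof (intro allI impI)
    fix f and F :: "'a set" assume "finite F"
    then obtain n where n: "Fs n = F" "Ps n = {i\<in>F. f i}" "bs n = True" using find by blast
    show "\<exists>h. \<forall>i\<in>F. (-h + i \<in> S) = f i"
    proof (intro exI[of _ "GG Fs bs n"] ballI)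
      fix i assume "i \<in> F"
      then have "(phi (bs n) (GG Fs bs n) i \<in> S) \<longleftrightarrow> i \<in> Ps n" using k n(1) by blast
      then show "(- GG Fs bs n + i \<in> S) = f i" using n \<open>i \<in> F\<close> by (simp add: phi_def)
    qed
  qed
  moreover have "RP S" unfolding RP_def
  proof (intro allI impI)
    fix f and F :: "'a set" assume "finite F"
    then obtain n where n: "Fs n = F" "Ps n = {i\<in>F. f i}" "bs n = False" using find by blast
    show "\<exists>h. \<forall>i\<in>F. (i + -h \<in> S) = f i"
    proof (intro exI[of _ "GG Fs bs n"] ballI)
      fix i assume "i \<in> F"
      then have "(phi (bs n) (GG Fs bs n) i \<in> S) \<longleftrightarrow> i \<in> Ps n" using k n(1) by blast
      then show "(i + - GG Fs bs n \<in> S) = f i" using n \<open>i \<in> F\<close> by (simp add: phi_def del: add_uminus_conv_diff)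
    qed
  qed
  ultimately show ?thesis by blast
qed

theorem proposition3p2:
  assumes "countable (UNIV :: 'a::group_add set)"
    and "infinite (UNIV :: 'a set)"
  shows "(D_L \<inter> D_R :: 'a set set) \<noteq> {} \<and> bi_invariant (D_L \<inter> D_R :: 'a set set)"
proof
  obtain S :: "'a set" where "LP S" "RP S" using exists_LR[OF assms] by blast
  then have "S \<in> D_L \<inter> D_R" by (simp add: DL_iff DR_iff)
  then show "(D_L \<inter> D_R :: 'a set set) \<noteq> {}" by blast
next
  show "bi_invariant (D_L \<inter> D_R :: 'a set set)"
    unfolding bi_invariant_def
    by (simp add: DL_iff DR_iff LP_l LP_r RP_l RP_r)
qed
end
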